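(* Let $d,n\in\mathbb N$ with $n\ge2$, $A\in\mathbb R^{d\times d}$, $V=I_d$, and let $f$ be self-attention with parameters $(A,V)$. Let $\gamma$ be a real eigenvalue of $A$ and $u\in\mathbb R^d$ an associated unit eigenvector. (1) If $\gamma\ge0$, let $X:=(u,\tfrac u2,\dots,\tfrac u2)\in(\mathbb R^d)^n$. Then for every $R>0$, $$\|D_{RX}f\|_2\ge\frac{\sqrt{n-1}}{1+(n-1)e^{-R^2\gamma/4}}.$$ (2) If $\gamma<0$, let $X:=(u,-u,\dots,-u)\in(\mathbb R^d)^n$. Then for every $R>0$, $$\|D_{RX}f\|_2\ge\frac{\sqrt{n-1}}{1+(n-1)e^{-2R^2|\gamma|}}.$$
   Context: For $X=(x_1,\dots,x_n)\in(\mathbb R^d)^n$, $f(X)=\big(V\sum_{j=1}^nP_{ij}x_j\big)_{1\le i\le n}$ with $P_{ij}=\exp(x_i^\top A^\top x_j)/\sum_{l=1}^n\exp(x_i^\top A^\top x_l)$. $D_Xf$ is the differential of $f$ at $X$, and $\|D_Xf\|_2$ is its operator norm when $(\mathbb R^d)^n$ is equipped with the Frobenius norm $\|X\|_F=(\sum_i|x_i|^2)^{1/2}$ on both input and output. $RX$ denotes $(Rx_1,\dots,Rx_n)$. *)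

theory Defs
  imports "HOL-Analysis.Analysis"
begin

text \<open>Token configurations X = (x_1,...,x_n) in (R^d)^n are modelled as
  X :: real^'d^'n, with token x_i = X$i.  The norm on real^'d^'n is the
  Euclidean norm of the vector of token norms, i.e. the Frobenius norm.\<close>

text \<open>Attention weights P_ij = exp(x_i^T A^T x_j) / sum_l exp(x_i^T A^T x_l);
  note x_i^T A^T x_j = (A x_i) . x_j.\<close>
definition attn_P :: "real^'d^'d \<Rightarrow> real^'d^'n \<Rightarrow> 'n \<Rightarrow> 'n \<Rightarrow> real" where
  "attn_P A X i j =
     exp ((A *v (X$i)) \<bullet> (X$j)) / (\<Sum>l\<in>UNIV. exp ((A *v (X$i)) \<bullet> (X$l)))"

definition self_attention :: "real^'d^'d \<Rightarrow> real^'d^'d \<Rightarrow> real^'d^'n \<Rightarrow> real^'d^'n" where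
  "self_attention A V X = (\<chi> i. V *v (\<Sum>j\<in>UNIV. attn_P A X i j *\<^sub>R (X$j)))"

end

theory Submission imports Defs begin
lemma diff_nth: "(\<lambda>X::real^'d^'n. X $ i) differentiable (at Y)"
  using bounded_linear_imp_differentiable[OF bounded_linear_vec_nth] .
lemma diff_Av: "(\<lambda>X::real^'d^'n. A *v (X $ i)) differentiable (at Y)"
  by (rule bounded_linear_imp_differentiable, rule bounded_linear_compose[OF matrix_vector_mul_bounded_linear bounded_linear_vec_nth])
lemma diff_sc: "(\<lambda>X::real^'d^'n. (A *v (X $ i)) \<bullet> X$j) differentiable (at Y)"
  using diff_Av diff_nth by (rule differentiable_inner)
lemma diff_exp: "(\<lambda>X::real^'d^'n. exp ((A *v (X $ i)) \<bullet> X$j)) differentiable (at Y)"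
  using differentiable_compose[OF _ diff_sc, of exp] 
  by (simp add: o_def differentiableI[OF has_field_derivative_imp_has_derivative[OF DERIV_exp]])
lemma diff_P: "(\<lambda>X::real^'d^'n. attn_P A X i j) differentiable (at Y)"
  unfolding attn_P_def
  apply (intro differentiable_divide differentiable_sum ballI diff_exp)
   apply simp
  by (intro less_imp_neq[symmetric] sum_pos) auto
lemma emb_bl: "bounded_linear (\<lambda>v::real^'d. (\<chi> k::'n::finite. if k = i then v else 0))"
  apply (subst linear_conv_bounded_linear[symmetric])
  by (rule linearI) (auto simp: vec_eq_iff)
lemma vec_sum_emb: "(\<chi> i. F i) = (\<Sum>i\<in>UNIV. (\<chi> k::'n::finite. if k = i then F i else (0::real^'d)))"
  by (simp add: vec_eq_iff sum_component if_distrib cong: if_cong)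
lemma diff_SA: "self_attention A (mat 1) differentiable (at (Y::real^'d^'n))"
proof -
  have "self_attention A (mat 1) = (\<lambda>X. \<Sum>i\<in>UNIV. (\<chi> k::'n::finite. if k = i then (\<Sum>j\<in>UNIV. attn_P A X i j *\<^sub>R (X$j)) else 0))"
    unfolding self_attention_def matrix_vector_mul_lid by (subst vec_sum_emb) simp
  moreover have "(\<lambda>X. \<Sum>i\<in>UNIV. (\<chi> k::'n::finite. if k = i then (\<Sum>j\<in>UNIV. attn_P A X i j *\<^sub>R (X$j)) else 0)) differentiable (at Y)"
    apply (intro differentiable_sum ballI finite)
    apply (rule differentiable_compose[of "\<lambda>v. (\<chi> k::'n::finite. if k = _ then v else 0)", unfolded o_def])
     apply (rule bounded_linear_imp_differentiable[OF emb_bl])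
    apply (intro differentiable_sum ballI finite differentiable_scaleR diff_P diff_nth)
    done
  ultimately show ?thesis by simp
qed
lemma sum_if_gen:
  fixes F :: "'a \<Rightarrow> real" and i0 :: "'n::finite"
  shows "(\<Sum>j\<in>UNIV. F (if j = i0 then p else q)) = F p + (real CARD('n) - 1) * F q"
proof -
  have "(\<Sum>j\<in>UNIV. F (if j = i0 then p else q)) = F p + (\<Sum>j\<in>UNIV-{i0}. F (if j = i0 then p else q))"
    by (simp add: sum.remove[of UNIV i0])
  also have "(\<Sum>j\<in>UNIV-{i0}. F (if j = i0 then p else q)) = (\<Sum>j\<in>UNIV-{i0}. F q)"
    by (rule sum.cong) auto
  also have "\<dots> = (real CARD('n) - 1) * F q"
    by (simp add: card_Diff_singleton of_nat_diff)
  finally show ?thesis .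
qed

lemma score: "norm (u::real^'d::finite) = 1 \<Longrightarrow> A *v u = \<gamma> *\<^sub>R u \<Longrightarrow> (A *v (p *\<^sub>R u)) \<bullet> (q *\<^sub>R u) = \<gamma> * p * q"
proof -
  assume a: "norm u = 1" "A *v u = \<gamma> *\<^sub>R u"
  have "A *v (p *\<^sub>R u) = p *\<^sub>R (A *v u)"
    using matrix_vector_mul_linear[of A] by (simp add: linear_scale)
  moreover have "u \<bullet> u = 1" using a(1) by (simp add: power2_norm_eq_inner[symmetric])
  ultimately show ?thesis using a(2) by simp
qed
lemma phi_formula:
  fixes i0 :: "'n::finite" and u :: "real^'d::finite"
  assumes unit: "norm u = 1" and eig: "A *v u = \<gamma> *\<^sub>R u"
  shows "self_attention A (mat 1) (\<chi> j::'n. (if j = i0 then p else q) *\<^sub>R u) \<bullet> (\<chi> k. if k = i0 then 0 else u)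
   = (real CARD('n) - 1) * ((exp (\<gamma>*q*p) * p + (real CARD('n) - 1) * (exp (\<gamma>*q*q) * q)) / (exp (\<gamma>*q*p) + (real CARD('n)-1) * exp (\<gamma>*q*q)))"
    (is "?L = ?m * ?s")
proof -
  define Y where "Y = (\<chi> j::'n. (if j = i0 then p else q) *\<^sub>R u)"
  define S where "S = exp (\<gamma>*q*p) + (real CARD('n)-1) * exp (\<gamma>*q*q)"
  have uu: "u \<bullet> u = 1" using unit by (simp add: power2_norm_eq_inner[symmetric])
  have row: "self_attention A (mat 1) Y $ i \<bullet> u = ?s" if "i \<noteq> i0" for i
  proof -
    have Yi: "Y $ i = q *\<^sub>R u" using that by (simp add: Y_def)
    have Yj: "Y $ j = (if j = i0 then p else q) *\<^sub>R u" for j by (simp add: Y_def)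
    have sc: "(A *v (Y $ i)) \<bullet> (Y $ j) = \<gamma> * q * (if j = i0 then p else q)" for j
      unfolding Yi unfolding Y_def vec_lambda_beta by (rule score[OF unit eig])
    have Ssum: "(\<Sum>l\<in>UNIV. exp ((A *v (Y$i)) \<bullet> (Y$l))) = S"
      unfolding sc S_def using sum_if_gen[of "\<lambda>c. exp (\<gamma>*q*c)" i0 p q] by simp
    have Ssum': "(\<Sum>l\<in>UNIV. exp (\<gamma> * q * (if l = i0 then p else q))) = S"
      using Ssum unfolding sc .
    have "self_attention A (mat 1) Y $ i \<bullet> u = (\<Sum>j\<in>UNIV. attn_P A Y i j * (if j = i0 then p else q))"
      by (simp add: self_attention_def inner_sum_left Yj uu)
    also have "\<dots> = (\<Sum>j\<in>UNIV. exp (\<gamma>*q*(if j = i0 then p else q)) * (if j = i0 then p else q) / S)"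
      by (rule sum.cong) (auto simp: attn_P_def sc Ssum')
    also have "\<dots> = ?s"
      using sum_if_gen[of "\<lambda>c. exp (\<gamma>*q*c) * c / S" i0 p q] by (simp add: S_def add_divide_distrib)
    finally show ?thesis .
  qed
  have "?L = (\<Sum>i\<in>UNIV. self_attention A (mat 1) Y $ i \<bullet> (if i = i0 then 0 else u))"
    by (simp add: Y_def inner_vec_def)
  also have "\<dots> = (\<Sum>i\<in>UNIV-{i0}. self_attention A (mat 1) Y $ i \<bullet> (if i = i0 then 0 else u))"
    by (simp add: sum.remove[of UNIV i0])
  also have "\<dots> = (\<Sum>i\<in>UNIV-{i0}. ?s)"
    by (rule sum.cong) (auto simp: row)
  also have "\<dots> = ?m * ?s"
    by (simp add: card_Diff_singleton of_nat_diff)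
  finally show ?thesis .
qed
lemma key:
  fixes A :: "real^'d^'d" and u :: "real^'d::finite" and \<gamma> :: real and i0 :: "'n::finite"
  assumes n2: "CARD('n) \<ge> 2" and eig: "A *v u = \<gamma> *\<^sub>R u" and unit: "norm u = 1"
    and R: "R > 0" and sign: "\<gamma> * b * (a - b) \<ge> 0"
  shows "onorm (frechet_derivative (self_attention A (mat 1)) (at (R *\<^sub>R ((\<chi> i. if i = i0 then a *\<^sub>R u else b *\<^sub>R u) :: real^'d^'n))))
     \<ge> sqrt (real CARD('n) - 1) / (1 + (real CARD('n) - 1) * exp (\<gamma>*R\<^sup>2*b*(b-a)))"
proof -
  define m where "m = real CARD('n) - 1"
  have m1: "m \<ge> 1" using n2 by (simp add: m_def)
  define f where "f = (self_attention A (mat 1) :: real^'d^'n \<Rightarrow> real^'d^'n)"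
  define x0 where "x0 = R *\<^sub>R ((\<chi> i. if i = i0 then a *\<^sub>R u else b *\<^sub>R u) :: real^'d^'n)"
  define D where "D = frechet_derivative f (at x0)"
  have fd: "(f has_derivative D) (at x0)"
    unfolding D_def f_def using diff_SA frechet_derivative_works by blast
  have bl: "bounded_linear D" using fd by (rule has_derivative_bounded_linear)
  define h where "h = ((\<chi> k. if k = i0 then u else 0) :: real^'d^'n)"
  define w where "w = ((\<chi> k. if k = i0 then 0 else u) :: real^'d^'n)"
  define E where "E = (\<lambda>t. exp (\<gamma>*(R*b)*(R*a+t)))"
  define K where "K = exp (\<gamma>*(R*b)*(R*b))"
  define s where "s = (\<lambda>t. (E t * (R*a+t) + m * (K*(R*b))) / (E t + m*K))"
  define \<phi> where "\<phi> = (\<lambda>t. f (x0 + t *\<^sub>R h) \<bullet> w)"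
  have line: "x0 + t *\<^sub>R h = (\<chi> j. (if j = i0 then R*a+t else R*b) *\<^sub>R u)" for t
    by (simp add: x0_def h_def vec_eq_iff algebra_simps)
  have phi_eq: "\<phi> = (\<lambda>t. m * s t)"
  proof
    fix t
    show "\<phi> t = m * s t"
      unfolding \<phi>_def line f_def w_def
      by (subst phi_formula[OF unit eig]) (simp add: s_def E_def K_def m_def mult.commute mult.left_commute)
  qed
  have dl: "((\<lambda>t. x0 + t *\<^sub>R h) has_derivative (\<lambda>t. t *\<^sub>R h)) (at 0)"
    by (auto intro!: derivative_eq_intros)
  have fd': "(f has_derivative D) (at ((\<lambda>t. x0 + t *\<^sub>R h) 0))" using fd by simp
  have "((f \<circ> (\<lambda>t. x0 + t *\<^sub>R h)) has_derivative (D \<circ> (\<lambda>t. t *\<^sub>R h))) (at 0)"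
    by (rule diff_chain_at[OF dl fd'])
  then have "(\<phi> has_derivative (\<lambda>t. (D (t *\<^sub>R h)) \<bullet> w)) (at 0)"
    unfolding \<phi>_def o_def by (auto intro!: derivative_eq_intros)
  moreover have "(\<lambda>t. (D (t *\<^sub>R h)) \<bullet> w) = (*) (D h \<bullet> w)"
    using bl by (auto simp: linear_scale bounded_linear.linear)
  ultimately have d1: "(\<phi> has_real_derivative (D h \<bullet> w)) (at 0)"
    by (simp add: has_field_derivative_def)
  define E0 where "E0 = E 0"
  have E0: "E0 > 0" by (simp add: E0_def E_def)
  have K0: "K > 0" by (simp add: K_def)
  have dE: "(E has_real_derivative E0 * (\<gamma>*(R*b))) (at 0)"
    unfolding E_def E0_def by (auto intro!: derivative_eq_intros)
  have dN: "((\<lambda>t. E t * (R*a+t) + m * (K*(R*b))) has_real_derivative (E0 * (\<gamma>*(R*b)) * (R*a) + E0)) (at 0)"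
    using dE unfolding E0_def by (auto intro!: derivative_eq_intros)
  have dDn: "((\<lambda>t. E t + m*K) has_real_derivative (E0 * (\<gamma>*(R*b)))) (at 0)"
    using dE by (auto intro!: derivative_eq_intros)
  define Dn where "Dn = E0 + m*K"
  define N where "N = E0 * (R*a) + m * (K*(R*b))"
  have Dn0: "Dn > 0" using E0 K0 m1 by (simp add: Dn_def add_pos_pos)
  define s' where "s' = ((E0 * (\<gamma>*(R*b)) * (R*a) + E0) * Dn - N * (E0 * (\<gamma>*(R*b)))) / (Dn * Dn)"
  have ds: "(s has_real_derivative s') (at 0)"
    unfolding s_def s'_def
    using DERIV_divide[OF dN dDn] Dn0 by (simp add: E0_def Dn_def N_def)
  have d2: "(\<phi> has_real_derivative m * s') (at 0)"
    unfolding phi_eq using ds by (rule DERIV_cmult)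
  have eq: "D h \<bullet> w = m * s'" using DERIV_unique[OF d1 d2] .
  have num: "(E0 * (\<gamma>*(R*b)) * (R*a) + E0) * Dn - N * (E0 * (\<gamma>*(R*b))) - E0 * Dn
      = (\<gamma> * b * (a - b)) * (R\<^sup>2 * E0 * m * K)"
    by (simp add: Dn_def N_def algebra_simps power2_eq_square)
  have "(\<gamma> * b * (a - b)) * (R\<^sup>2 * E0 * m * K) \<ge> 0"
    using sign E0 K0 m1 by simp
  then have "E0 * Dn \<le> (E0 * (\<gamma>*(R*b)) * (R*a) + E0) * Dn - N * (E0 * (\<gamma>*(R*b)))"
    using num by linarith
  then have "E0 * Dn / (Dn * Dn) \<le> s'"
    unfolding s'_def using Dn0 by (intro divide_right_mono) simp_all
  then have s'ge: "E0 / Dn \<le> s'" using Dn0 by simp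
  have Pe: "E0 / Dn = 1 / (1 + m * exp (\<gamma>*R\<^sup>2*b*(b-a)))"
  proof -
    have "exp (\<gamma>*R\<^sup>2*b*(b-a)) = K / E0"
      by (simp add: K_def E0_def E_def exp_diff[symmetric] algebra_simps power2_eq_square)
    moreover have "E0 + m*K \<noteq> 0" using Dn0 by (simp add: Dn_def)
    moreover have "1/(1+m*(K/E0)) = E0/(E0+m*K)" using E0 calculation(2) by (simp add: field_simps)
    ultimately show ?thesis by (simp add: Dn_def)
  qed
  have nh: "norm h = 1"
  proof -
    have "norm h = sqrt (\<Sum>i\<in>UNIV. (\<lambda>v. (norm v)\<^sup>2) (if i = i0 then u else 0))"
      unfolding norm_vec_def[of h] L2_set_def by (simp add: h_def)
    also have "\<dots> = 1" using sum_if_gen[of "\<lambda>v. (norm v)\<^sup>2" i0 u 0] unit by simp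
    finally show ?thesis .
  qed
  have nw: "norm w = sqrt m"
  proof -
    have "norm w = sqrt (\<Sum>i\<in>UNIV. (\<lambda>v. (norm v)\<^sup>2) (if i = i0 then 0 else u))"
      unfolding norm_vec_def[of w] L2_set_def by (simp add: w_def)
    also have "\<dots> = sqrt m" using sum_if_gen[of "\<lambda>v. (norm v)\<^sup>2" i0 0 u] unit by (simp add: m_def)
    finally show ?thesis .
  qed
  have "m * s' \<le> norm (D h) * norm w" using eq norm_cauchy_schwarz by metis
  also have "\<dots> \<le> onorm D * norm h * norm w"
    by (rule mult_right_mono[OF onorm[OF bl]]) simp
  finally have main: "m * s' \<le> onorm D * sqrt m" using nh nw by simp
  have "sqrt m * (E0 / Dn) \<le> onorm D"
  proof -
    have sm: "sqrt m > 0" using m1 by simp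
    have "m * (E0/Dn) \<le> m * s'" using mult_left_mono[OF s'ge, of m] m1 by simp
    also have "\<dots> \<le> sqrt m * onorm D" using main by (simp add: mult.commute)
    finally have "m * (E0/Dn) \<le> sqrt m * onorm D" .
    moreover have "m = sqrt m * sqrt m" using m1 by simp
    ultimately have "sqrt m * (sqrt m * (E0/Dn)) \<le> sqrt m * onorm D"
      by (metis mult.assoc)
    then show ?thesis using sm by (rule mult_left_le_imp_le)
  qed
  then show ?thesis
    unfolding Pe m_def[symmetric] D_def f_def x0_def by simp
qed
theorem mainTheorem3:
  fixes A :: "real^'d^'d" and u :: "real^'d::finite" and \<gamma> :: real and i0 :: "'n::finite"
  assumes n2: "CARD('n) \<ge> 2"
    and eig: "A *v u = \<gamma> *\<^sub>R u"
    and unit: "norm u = 1"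
  shows
    "(\<gamma> \<ge> 0 \<longrightarrow>
      (\<forall>R>0. let X = (\<chi> i. if i = i0 then u else (1/2) *\<^sub>R u) :: real^'d^'n;
                  f = self_attention A (mat 1)
              in f differentiable (at (R *\<^sub>R X)) \<and>
                 onorm (frechet_derivative f (at (R *\<^sub>R X))) \<ge>
                   sqrt (real CARD('n) - 1) /
                     (1 + (real CARD('n) - 1) * exp (- (R\<^sup>2 * \<gamma> / 4)))))
   \<and>
    (\<gamma> < 0 \<longrightarrow>
      (\<forall>R>0. let X = (\<chi> i. if i = i0 then u else - u) :: real^'d^'n;
                  f = self_attention A (mat 1)
              in f differentiable (at (R *\<^sub>R X)) \<and>
                 onorm (frechet_derivative f (at (R *\<^sub>R X))) \<ge>
                   sqrt (real CARD('n) - 1) /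
                     (1 + (real CARD('n) - 1) * exp (- (2 * R\<^sup>2 * \<bar>\<gamma>\<bar>)))))"
proof (intro conjI impI allI)
  fix R :: real
  assume g: "\<gamma> \<ge> 0" and R: "R > 0"
  have X: "((\<chi> i. if i = i0 then u else (1/2) *\<^sub>R u) :: real^'d^'n)
      = (\<chi> i. if i = i0 then 1 *\<^sub>R u else (1/2) *\<^sub>R u)" by (simp add: vec_eq_iff)
  have ex: "\<gamma>*R\<^sup>2*(1/2)*(1/2-1) = - (R\<^sup>2 * \<gamma> / 4)" by (simp add: field_simps)
  show "let X = (\<chi> i. if i = i0 then u else (1/2) *\<^sub>R u) :: real^'d^'n;
                  f = self_attention A (mat 1)
              in f differentiable (at (R *\<^sub>R X)) \<and>
                 onorm (frechet_derivative f (at (R *\<^sub>R X))) \<ge>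
                   sqrt (real CARD('n) - 1) /
                     (1 + (real CARD('n) - 1) * exp (- (R\<^sup>2 * \<gamma> / 4)))"
    unfolding Let_def X
    using diff_SA key[OF n2 eig unit R, of "1/2" 1 i0] g by (simp only: ex) simp
next
  fix R :: real
  assume g: "\<gamma> < 0" and R: "R > 0"
  have X: "((\<chi> i. if i = i0 then u else - u) :: real^'d^'n)
      = (\<chi> i. if i = i0 then 1 *\<^sub>R u else (-1) *\<^sub>R u)" by (simp add: vec_eq_iff)
  have ex: "\<gamma>*R\<^sup>2*(-1)*(-1-1) = - (2 * R\<^sup>2 * \<bar>\<gamma>\<bar>)" using g by (simp add: field_simps)
  show "let X = (\<chi> i. if i = i0 then u else - u) :: real^'d^'n;
                  f = self_attention A (mat 1)
              in f differentiable (at (R *\<^sub>R X)) \<and>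
                 onorm (frechet_derivative f (at (R *\<^sub>R X))) \<ge>
                   sqrt (real CARD('n) - 1) /
                     (1 + (real CARD('n) - 1) * exp (- (2 * R\<^sup>2 * \<bar>\<gamma>\<bar>)))"
    unfolding Let_def X
    using diff_SA key[OF n2 eig unit R, of "-1" 1 i0] g by (simp only: ex) simp
qed
end
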